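(* Let $B$ and $H$ be bialgebras over a field $\mathbb{k}$ and $\langle-,-\rangle\colon B\otimes H\to\mathbb{k}$ a Hopf (bialgebra) pairing. (i) Let $I\subset B$ be a coideal and $K_H$ a set of algebra generators of $H$. If $\langle i,h\rangle=0$ for all $i\in I$ and $h\in K_H$, then $\langle i,h\rangle=0$ for all $i\in I$ and $h\in H$. (ii) Let $I\subset B$ be a biideal, $K_I\subset I$ a set of generators of $I$ as an ideal, and $K_H$ a set of generators of $H$ as an algebra. If $\langle i,h\rangle=0$ for all $i\in K_I$ and $h\in K_H$, and moreover $\Delta^2(h)\in H\otimes\mathrm{Span}_{\mathbb{k}}(K_H\cup\{1\})\otimes H$ for all $h\in K_H$, then $\langle i,h\rangle=0$ for all $i\in I$ and $h\in H$.
   Context: A Hopf (bialgebra) pairing $\langle-,-\rangle\colon B\otimes H\to\mathbb{k}$ is a bilinear form (not necessarily nondegenerate) with $\langle\Delta_B(b),h\otimes k\rangle=\langle b,hk\rangle$, $\langle b,1_H\rangle=\epsilon_B(b)$, $\langle b\otimes c,\Delta_H(h)\rangle=\langle bc,h\rangle$, $\langle 1_B,h\rangle=\epsilon_H(h)$, where pairings of tensor products are taken componentwise. A coideal $I\subset B$ is a subspace with $\Delta(I)\subset I\otimes B+B\otimes I$ and $\epsilon(I)=0$; a biideal is an ideal that is also a coideal. $\Delta^2=(\mathrm{id}\otimes\Delta)\circ\Delta\colon H\to H^{\otimes 3}$. *)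

theory Defs
  imports Main "HOL.Vector_Spaces"
begin

text \<open>
  Since no tensor product is available, an element
  of A \<otimes> A is represented by a finite list of pairs (a finite sum of elementary
  tensors); two such representations denote the same tensor iff all linear
  functionals phi \<otimes> psi agree on them (over a field, the functionals phi \<otimes> psi
  separate the points of A \<otimes> A).
\<close>

definition lin_fun :: "('k::field \<Rightarrow> 'a::ab_group_add \<Rightarrow> 'a) \<Rightarrow> ('a \<Rightarrow> 'k) \<Rightarrow> bool" where
  "lin_fun s \<phi> \<longleftrightarrow> Vector_Spaces.linear s (*) \<phi>"

definition teq2 :: "('k::field \<Rightarrow> 'a::ab_group_add \<Rightarrow> 'a) \<Rightarrow> ('a \<times> 'a) list \<Rightarrow> ('a \<times> 'a) list \<Rightarrow> bool" where
  "teq2 s xs ys \<longleftrightarrow> (\<forall>\<phi> \<psi>. lin_fun s \<phi> \<and> lin_fun s \<psi> \<longrightarrow>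
      (\<Sum>(a,b)\<leftarrow>xs. \<phi> a * \<psi> b) = (\<Sum>(a,b)\<leftarrow>ys. \<phi> a * \<psi> b))"

definition teq3 :: "('k::field \<Rightarrow> 'a::ab_group_add \<Rightarrow> 'a) \<Rightarrow> ('a \<times> 'a \<times> 'a) list \<Rightarrow> ('a \<times> 'a \<times> 'a) list \<Rightarrow> bool" where
  "teq3 s xs ys \<longleftrightarrow> (\<forall>\<phi> \<psi> \<chi>. lin_fun s \<phi> \<and> lin_fun s \<psi> \<and> lin_fun s \<chi> \<longrightarrow>
      (\<Sum>(a,b,c)\<leftarrow>xs. \<phi> a * \<psi> b * \<chi> c) = (\<Sum>(a,b,c)\<leftarrow>ys. \<phi> a * \<psi> b * \<chi> c))"

text \<open>(id \<otimes> \<Delta>) \<circ> \<Delta> and (\<Delta> \<otimes> id) \<circ> \<Delta>\<close>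
definition Delta2 :: "('a \<Rightarrow> ('a \<times> 'a) list) \<Rightarrow> 'a \<Rightarrow> ('a \<times> 'a \<times> 'a) list" where
  "Delta2 \<Delta> x = concat (map (\<lambda>(a,b). map (\<lambda>(c,d). (a,c,d)) (\<Delta> b)) (\<Delta> x))"

definition Delta2' :: "('a \<Rightarrow> ('a \<times> 'a) list) \<Rightarrow> 'a \<Rightarrow> ('a \<times> 'a \<times> 'a) list" where
  "Delta2' \<Delta> x = concat (map (\<lambda>(a,b). map (\<lambda>(c,d). (c,d,b)) (\<Delta> a)) (\<Delta> x))"

definition bialgebra :: "('k::field \<Rightarrow> 'a::ring_1 \<Rightarrow> 'a) \<Rightarrow> ('a \<Rightarrow> ('a \<times> 'a) list) \<Rightarrow> ('a \<Rightarrow> 'k) \<Rightarrow> bool" where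
  "bialgebra s \<Delta> \<epsilon> \<longleftrightarrow>
     vector_space s \<and>
     (\<forall>c x y. s c (x * y) = s c x * y \<and> s c (x * y) = x * s c y) \<and>
     lin_fun s \<epsilon> \<and> \<epsilon> 1 = 1 \<and> (\<forall>x y. \<epsilon> (x * y) = \<epsilon> x * \<epsilon> y) \<and>
     (\<forall>c x y. teq2 s (\<Delta> (s c x + y)) (map (\<lambda>(a,b). (s c a, b)) (\<Delta> x) @ \<Delta> y)) \<and>
     (\<forall>x. teq3 s (Delta2 \<Delta> x) (Delta2' \<Delta> x)) \<and>
     (\<forall>x. (\<Sum>(a,b)\<leftarrow>\<Delta> x. s (\<epsilon> a) b) = x \<and> (\<Sum>(a,b)\<leftarrow>\<Delta> x. s (\<epsilon> b) a) = x) \<and>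
     (\<forall>x y. teq2 s (\<Delta> (x * y)) (concat (map (\<lambda>(a,b). map (\<lambda>(c,d). (a * c, b * d)) (\<Delta> y)) (\<Delta> x)))) \<and>
     teq2 s (\<Delta> 1) [(1,1)]"

definition hopf_pairing ::
  "('k::field \<Rightarrow> 'b::ring_1 \<Rightarrow> 'b) \<Rightarrow> ('b \<Rightarrow> ('b \<times> 'b) list) \<Rightarrow> ('b \<Rightarrow> 'k) \<Rightarrow>
   ('k \<Rightarrow> 'h::ring_1 \<Rightarrow> 'h) \<Rightarrow> ('h \<Rightarrow> ('h \<times> 'h) list) \<Rightarrow> ('h \<Rightarrow> 'k) \<Rightarrow>
   ('b \<Rightarrow> 'h \<Rightarrow> 'k) \<Rightarrow> bool" where
  "hopf_pairing sB \<Delta>B \<epsilon>B sH \<Delta>H \<epsilon>H P \<longleftrightarrow>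
     (\<forall>h. lin_fun sB (\<lambda>b. P b h)) \<and> (\<forall>b. lin_fun sH (P b)) \<and>
     (\<forall>b h k. (\<Sum>(x,y)\<leftarrow>\<Delta>B b. P x h * P y k) = P b (h * k)) \<and>
     (\<forall>b. P b 1 = \<epsilon>B b) \<and>
     (\<forall>b c h. (\<Sum>(x,y)\<leftarrow>\<Delta>H h. P b x * P c y) = P (b * c) h) \<and>
     (\<forall>h. P 1 h = \<epsilon>H h)"

definition coideal :: "('k::field \<Rightarrow> 'a::ring_1 \<Rightarrow> 'a) \<Rightarrow> ('a \<Rightarrow> ('a \<times> 'a) list) \<Rightarrow> ('a \<Rightarrow> 'k) \<Rightarrow> 'a set \<Rightarrow> bool" where
  "coideal s \<Delta> \<epsilon> I \<longleftrightarrow> module.subspace s I \<and>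
     (\<forall>i\<in>I. \<exists>xs. teq2 s (\<Delta> i) xs \<and> (\<forall>(a,b)\<in>set xs. a \<in> I \<or> b \<in> I)) \<and>
     (\<forall>i\<in>I. \<epsilon> i = 0)"

definition alg_ideal :: "('k::field \<Rightarrow> 'a::ring_1 \<Rightarrow> 'a) \<Rightarrow> 'a set \<Rightarrow> bool" where
  "alg_ideal s I \<longleftrightarrow> module.subspace s I \<and> (\<forall>i\<in>I. \<forall>x. x * i \<in> I \<and> i * x \<in> I)"

definition biideal :: "('k::field \<Rightarrow> 'a::ring_1 \<Rightarrow> 'a) \<Rightarrow> ('a \<Rightarrow> ('a \<times> 'a) list) \<Rightarrow> ('a \<Rightarrow> 'k) \<Rightarrow> 'a set \<Rightarrow> bool" where
  "biideal s \<Delta> \<epsilon> I \<longleftrightarrow> alg_ideal s I \<and> coideal s \<Delta> \<epsilon> I"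

definition subalgebra :: "('k::field \<Rightarrow> 'a::ring_1 \<Rightarrow> 'a) \<Rightarrow> 'a set \<Rightarrow> bool" where
  "subalgebra s S \<longleftrightarrow> module.subspace s S \<and> 1 \<in> S \<and> (\<forall>x\<in>S. \<forall>y\<in>S. x * y \<in> S)"

definition generates_algebra :: "('k::field \<Rightarrow> 'a::ring_1 \<Rightarrow> 'a) \<Rightarrow> 'a set \<Rightarrow> bool" where
  "generates_algebra s K \<longleftrightarrow> \<Inter>{S. subalgebra s S \<and> K \<subseteq> S} = UNIV"

definition ideal_generated :: "('k::field \<Rightarrow> 'a::ring_1 \<Rightarrow> 'a) \<Rightarrow> 'a set \<Rightarrow> 'a set" where
  "ideal_generated s K = \<Inter>{J. alg_ideal s J \<and> K \<subseteq> J}"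

end

theory Submission
  imports Defs
begin

lemma lf_hom: "lin_fun s \<phi> \<Longrightarrow> module_hom s (*) \<phi>"
  unfolding lin_fun_def by (simp add: module_hom_iff_linear)

lemma lf_module: "lin_fun s \<phi> \<Longrightarrow> module s"
  unfolding lin_fun_def linear_def by (simp add: module_iff_vector_space)

lemma lf_add: "lin_fun s \<phi> \<Longrightarrow> \<phi> (x + y) = \<phi> x + \<phi> y"
  using lf_hom module_hom.add by blast

lemma lf_scale: "lin_fun s \<phi> \<Longrightarrow> \<phi> (s c x) = c * \<phi> x"
  using lf_hom module_hom.scale by blast

lemma lf_zero: "lin_fun s \<phi> \<Longrightarrow> \<phi> 0 = 0"
  using lf_hom module_hom.zero by blast

lemma lf_span: "lin_fun s \<phi> \<Longrightarrow> (\<And>x. x \<in> K \<Longrightarrow> \<phi> x = 0) \<Longrightarrow> x \<in> module.span s K \<Longrightarrow> \<phi> x = 0"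
  using lf_hom module_hom.eq_0_on_span by blast

lemma inner: "(f::'k::field) * (\<Sum>p\<leftarrow>ys. g (fst p) * k (snd p)) = (\<Sum>p\<leftarrow>ys. f * g (fst p) * k (snd p))"
  by (induction ys) (auto simp: algebra_simps)

lemma d2: "(\<Sum>(u,v)\<leftarrow>xs. f u * (\<Sum>(c,d)\<leftarrow>D v. g c * k d)) = (\<Sum>(a,c,d)\<leftarrow>concat (map (\<lambda>(a,b). map (\<lambda>(c,d). (a,c,d)) (D b)) xs). f a * g c * (k d::'k::field))"
  by (induction xs) (auto simp: inner o_def case_prod_beta)

lemma sum_list_zero: "(\<And>p. p \<in> set xs \<Longrightarrow> f p = (0::'k::field)) \<Longrightarrow> sum_list (map f xs) = 0"
  by (induction xs) auto

lemma part1: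
  assumes hp: "hopf_pairing sB \<Delta>B \<epsilon>B sH \<Delta>H \<epsilon>H P"
    and ci: "coideal sB \<Delta>B \<epsilon>B I" and gen: "generates_algebra sH KH"
    and z: "\<forall>i\<in>I. \<forall>h\<in>KH. P i h = 0"
  shows "\<forall>i\<in>I. \<forall>h. P i h = 0"
proof -
  define S where "S = {h. \<forall>i\<in>I. P i h = 0}"
  note hpd = hp[unfolded hopf_pairing_def]
  have linH: "\<And>b. lin_fun sH (P b)" using hpd by blast
  have linB: "\<And>h. lin_fun sB (\<lambda>b. P b h)" using hpd by blast
  have mulB: "\<And>b h k. (\<Sum>(x,y)\<leftarrow>\<Delta>B b. P x h * P y k) = P b (h * k)" using hpd by blast
  have one: "\<And>b. P b 1 = \<epsilon>B b" using hpd by blast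
  have sub: "module.subspace sH S"
    unfolding module.subspace_def[OF lf_module[OF linH]]
  proof (intro conjI ballI allI)
    show "0 \<in> S" using lf_zero[OF linH] unfolding S_def by simp
  next
    fix x y assume "x \<in> S" "y \<in> S"
    then show "x + y \<in> S" using lf_add[OF linH] unfolding S_def by simp
  next
    fix c x assume "x \<in> S"
    then show "sH c x \<in> S" using lf_scale[OF linH] unfolding S_def by simp
  qed
  have eps: "\<forall>i\<in>I. \<epsilon>B i = 0" using ci unfolding coideal_def by (rule conjunct2[THEN conjunct2])
  have "1 \<in> S" using eps one unfolding S_def by simp
  moreover have "\<forall>x\<in>S. \<forall>y\<in>S. x * y \<in> S"
  proof (intro ballI)
    fix h k assume h: "h \<in> S" and k: "k \<in> S"
    show "h * k \<in> S" unfolding S_def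
    proof (intro CollectI ballI)
      fix i assume i: "i \<in> I"
      then obtain xs where t: "teq2 sB (\<Delta>B i) xs" and xs: "\<forall>(a,b)\<in>set xs. a \<in> I \<or> b \<in> I"
        using ci unfolding coideal_def by blast
      have "P i (h * k) = (\<Sum>(x,y)\<leftarrow>\<Delta>B i. P x h * P y k)" using mulB by simp
      also have "\<dots> = (\<Sum>(x,y)\<leftarrow>xs. P x h * P y k)"
        using t linB[of h] linB[of k] unfolding teq2_def
        apply -
        apply (erule allE[where x="\<lambda>b. P b h"], erule allE[where x="\<lambda>b. P b k"])
        apply simp
        done
      also have "\<dots> = 0"
        by (rule sum_list_zero) (use xs h k in \<open>auto simp: S_def\<close>)
      finally show "P i (h * k) = 0" .
    qed
  qed
  ultimately have "subalgebra sH S" using sub unfolding subalgebra_def by blast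
  moreover have "KH \<subseteq> S" using z unfolding S_def by auto
  ultimately have "UNIV \<subseteq> S" using gen unfolding generates_algebra_def by blast
  then show ?thesis unfolding S_def by auto
qed

theorem lemma2p1:
  fixes sB :: "'k::field \<Rightarrow> 'b::ring_1 \<Rightarrow> 'b" and \<Delta>B :: "'b \<Rightarrow> ('b \<times> 'b) list" and \<epsilon>B :: "'b \<Rightarrow> 'k"
    and sH :: "'k \<Rightarrow> 'h::ring_1 \<Rightarrow> 'h" and \<Delta>H :: "'h \<Rightarrow> ('h \<times> 'h) list" and \<epsilon>H :: "'h \<Rightarrow> 'k"
    and P :: "'b \<Rightarrow> 'h \<Rightarrow> 'k"
  assumes "bialgebra sB \<Delta>B \<epsilon>B"
    and "bialgebra sH \<Delta>H \<epsilon>H"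
    and "hopf_pairing sB \<Delta>B \<epsilon>B sH \<Delta>H \<epsilon>H P"
  shows
    "(\<forall>I KH. coideal sB \<Delta>B \<epsilon>B I \<and> generates_algebra sH KH \<and>
        (\<forall>i\<in>I. \<forall>h\<in>KH. P i h = 0)
        \<longrightarrow> (\<forall>i\<in>I. \<forall>h. P i h = 0))
     \<and>
     (\<forall>I KI KH. biideal sB \<Delta>B \<epsilon>B I \<and> KI \<subseteq> I \<and> ideal_generated sB KI = I \<and>
        generates_algebra sH KH \<and>
        (\<forall>i\<in>KI. \<forall>h\<in>KH. P i h = 0) \<and>
        (\<forall>h\<in>KH. \<exists>ts. teq3 sH (Delta2 \<Delta>H h) ts \<and>
            (\<forall>(a,c,d)\<in>set ts. c \<in> module.span sH (insert 1 KH)))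
        \<longrightarrow> (\<forall>i\<in>I. \<forall>h. P i h = 0))"
proof (intro conjI allI impI)
  fix I KH
  assume "coideal sB \<Delta>B \<epsilon>B I \<and> generates_algebra sH KH \<and> (\<forall>i\<in>I. \<forall>h\<in>KH. P i h = 0)"
  then show "\<forall>i\<in>I. \<forall>h. P i h = 0" using part1[OF assms(3)] by blast
next
  fix I KI KH
  assume A: "biideal sB \<Delta>B \<epsilon>B I \<and> KI \<subseteq> I \<and> ideal_generated sB KI = I \<and>
        generates_algebra sH KH \<and>
        (\<forall>i\<in>KI. \<forall>h\<in>KH. P i h = 0) \<and>
        (\<forall>h\<in>KH. \<exists>ts. teq3 sH (Delta2 \<Delta>H h) ts \<and>
            (\<forall>(a,c,d)\<in>set ts. c \<in> module.span sH (insert 1 KH)))"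
  have bi: "biideal sB \<Delta>B \<epsilon>B I" using A by (rule conjunct1)
  have KIsub: "KI \<subseteq> I" using A by (rule conjunct2[THEN conjunct1])
  have gen: "ideal_generated sB KI = I" using A by (rule conjunct2[THEN conjunct2, THEN conjunct1])
  have ga: "generates_algebra sH KH" using A by (rule conjunct2[THEN conjunct2, THEN conjunct2, THEN conjunct1])
  have z: "\<forall>i\<in>KI. \<forall>h\<in>KH. P i h = 0" using A by (rule conjunct2[THEN conjunct2, THEN conjunct2, THEN conjunct2, THEN conjunct1])
  have dd: "\<forall>h\<in>KH. \<exists>ts. teq3 sH (Delta2 \<Delta>H h) ts \<and>
            (\<forall>(a,c,d)\<in>set ts. c \<in> module.span sH (insert 1 KH))" using A by (rule conjunct2[THEN conjunct2, THEN conjunct2, THEN conjunct2, THEN conjunct2])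
  have ai: "alg_ideal sB I" using bi unfolding biideal_def by (rule conjunct1)
  have ci: "coideal sB \<Delta>B \<epsilon>B I" using bi unfolding biideal_def by (rule conjunct2)
  have eps: "\<forall>i\<in>I. \<epsilon>B i = 0" using ci unfolding coideal_def by (rule conjunct2[THEN conjunct2])
  note hpd = assms(3)[unfolded hopf_pairing_def]
  have linH: "\<And>b. lin_fun sH (P b)" using hpd by blast
  have linB: "\<And>h. lin_fun sB (\<lambda>b. P b h)" using hpd by blast
  have mulH: "\<And>b c h. (\<Sum>(x,y)\<leftarrow>\<Delta>H h. P b x * P c y) = P (b * c) h" using hpd by blast
  have one: "\<And>b. P b 1 = \<epsilon>B b" using hpd by blast
  define J where "J = {b \<in> I. \<forall>h\<in>KH. P b h = 0}"
  have subI: "module.subspace sB I" using ai unfolding alg_ideal_def by blast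
  have subJ: "module.subspace sB J"
    unfolding module.subspace_def[OF lf_module[OF linB]]
  proof (intro conjI ballI allI)
    show "0 \<in> J" using subI lf_zero[OF linB] unfolding module.subspace_def[OF lf_module[OF linB]] J_def by auto
  next
    fix x y assume "x \<in> J" "y \<in> J"
    then show "x + y \<in> J" using subI lf_add[OF linB] unfolding module.subspace_def[OF lf_module[OF linB]] J_def by auto
  next
    fix c x assume "x \<in> J"
    then show "sB c x \<in> J" using subI lf_scale[OF linB] unfolding module.subspace_def[OF lf_module[OF linB]] J_def by auto
  qed
  have key: "P (x * b * y) h = 0" if b: "b \<in> J" and h: "h \<in> KH" for x b y h
  proof -
    obtain ts where t: "teq3 sH (Delta2 \<Delta>H h) ts"
      and ts: "\<forall>(a,c,d)\<in>set ts. c \<in> module.span sH (insert 1 KH)"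
      using dd h by blast
    have bz: "P b c = 0" if "c \<in> module.span sH (insert 1 KH)" for c
    proof (rule lf_span[OF linH _ that])
      fix z assume "z \<in> insert 1 KH"
      then show "P b z = 0" using b one eps unfolding J_def by auto
    qed
    have "P (x * b * y) h = P (x * (b * y)) h" by (simp add: mult.assoc)
    also have "\<dots> = (\<Sum>(u,v)\<leftarrow>\<Delta>H h. P x u * P (b * y) v)" using mulH by simp
    also have "\<dots> = (\<Sum>(u,v)\<leftarrow>\<Delta>H h. P x u * (\<Sum>(c,d)\<leftarrow>\<Delta>H v. P b c * P y d))"
      using mulH by simp
    also have "\<dots> = (\<Sum>(a,c,d)\<leftarrow>Delta2 \<Delta>H h. P x a * P b c * P y d)"
      unfolding Delta2_def by (rule d2)
    also have "\<dots> = (\<Sum>(a,c,d)\<leftarrow>ts. P x a * P b c * P y d)"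
      using t linH[of x] linH[of b] linH[of y] unfolding teq3_def
      apply -
      apply (erule allE[where x="P x"], erule allE[where x="P b"], erule allE[where x="P y"])
      apply simp
      done
    also have "\<dots> = 0"
      by (rule sum_list_zero) (use ts bz in auto)
    finally show ?thesis .
  qed
  have "alg_ideal sB J"
    unfolding alg_ideal_def
  proof (intro conjI subJ ballI allI)
    fix i x assume i: "i \<in> J"
    have "x * i \<in> I" "i * x \<in> I" using i ai unfolding J_def alg_ideal_def by auto
    moreover have "\<forall>h\<in>KH. P (x * i) h = 0" using key[OF i, where x=x and y=1] by simp
    moreover have "\<forall>h\<in>KH. P (i * x) h = 0" using key[OF i, where x=1 and y=x] by simp
    ultimately show "x * i \<in> J" "i * x \<in> J" unfolding J_def by auto
  qed
  moreover have "KI \<subseteq> J" using KIsub z unfolding J_def by blast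
  ultimately have "I \<subseteq> J"
  proof -
    assume a: "alg_ideal sB J" "KI \<subseteq> J"
    have "ideal_generated sB KI \<subseteq> J" unfolding ideal_generated_def using a by (intro Inter_lower) simp
    then show ?thesis using gen by simp
  qed
  then have "\<forall>i\<in>I. \<forall>h\<in>KH. P i h = 0" unfolding J_def by blast
  then show "\<forall>i\<in>I. \<forall>h. P i h = 0" 
    using part1[OF assms(3) ci ga] by blast
qed

end
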